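(* Let $\alpha\in(0,1)$ and define $\|F\|=\max\{\|F\|_\infty,|\int_{-\infty}^0x\,dF(x)|\}$. Then for all distribution functions $F,G$ on $\mathbb R$ with $\|F\|<\infty$ and $\|G\|<\infty$, $$0\le\mathrm{CVaR}_\alpha(G)-\mathrm{CVaR}_\alpha(F)+\frac1\alpha\int_{-\infty}^{\mathrm{VaR}_\alpha(F)}\bigl(G(y)-F(y)\bigr)\,dy\le\frac1\alpha\|F-G\|\,\bigl|\mathrm{VaR}_\alpha(F)-\mathrm{VaR}_\alpha(G)\bigr|.$$
   Context: $\|F\|_\infty=\sup_x|F(x)|$. For a distribution function $F$, $\mathrm{VaR}_\alpha(F)=\inf\{y\in\mathbb R:F(y)\ge\alpha\}$ and $\mathrm{CVaR}_\alpha(F)=\mathrm{VaR}_\alpha(F)-\frac1\alpha\int_{-\infty}^{\mathrm{VaR}_\alpha(F)}F(y)\,dy$. *)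

theory Defs
  imports "HOL-Analysis.Analysis"
begin

definition distribution_function :: "(real \<Rightarrow> real) \<Rightarrow> bool" where
  "distribution_function F \<longleftrightarrow>
     mono F \<and> (\<forall>x. continuous (at_right x) F) \<and>
     (F \<longlongrightarrow> 0) at_bot \<and> (F \<longlongrightarrow> 1) at_top"

definition neg_part_mean :: "(real \<Rightarrow> real) \<Rightarrow> real" where
  "neg_part_mean F = (LINT x:{..0}|interval_measure F. x)"

(* |int_{(-inf,0]} x dF(x)| < infinity  (integrand is nonpositive) *)
definition neg_part_mean_finite :: "(real \<Rightarrow> real) \<Rightarrow> bool" where
  "neg_part_mean_finite F \<longleftrightarrow>
     (\<integral>\<^sup>+ x. indicator {..0} x * ennreal (- x) \<partial>interval_measure F) < \<infinity>"

definition sup_norm :: "(real \<Rightarrow> real) \<Rightarrow> real" where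
  "sup_norm H = (SUP x. \<bar>H x\<bar>)"

(* ||F - G|| = max { ||F - G||_inf , | int_{-inf}^0 x d(F - G)(x) | },
   the Stieltjes integral w.r.t. F - G being the difference of the integrals. *)
definition diff_norm :: "(real \<Rightarrow> real) \<Rightarrow> (real \<Rightarrow> real) \<Rightarrow> real" where
  "diff_norm F G = max (sup_norm (\<lambda>x. F x - G x)) \<bar>neg_part_mean F - neg_part_mean G\<bar>"

definition VaR :: "real \<Rightarrow> (real \<Rightarrow> real) \<Rightarrow> real" where
  "VaR \<alpha> F = Inf {y. F y \<ge> \<alpha>}"

definition CVaR :: "real \<Rightarrow> (real \<Rightarrow> real) \<Rightarrow> real" where
  "CVaR \<alpha> F = VaR \<alpha> F - (1 / \<alpha>) * (LINT y:{..VaR \<alpha> F}|lborel. F y)"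

end

theory Submission
  imports Defs "HOL-Probability.Probability"
begin

lemma df_facts:
  assumes "distribution_function F"
  shows "\<And>x y. x \<le> y \<Longrightarrow> F x \<le> F y" "\<And>a. continuous (at_right a) F"
    "(F \<longlongrightarrow> 0) at_bot" "(F \<longlongrightarrow> 1) at_top"
  using assms unfolding distribution_function_def mono_def by auto

lemma df_nonneg: assumes "distribution_function F" shows "0 \<le> F x"
proof -
  note d = df_facts[OF assms]
  show ?thesis using d(3) by (rule tendsto_upperbound) (auto simp: eventually_at_bot_linorder d(1) intro!: exI[of _ x])
qed

lemma df_le1: assumes "distribution_function F" shows "F x \<le> 1"
proof -
  note d = df_facts[OF assms]
  show ?thesis using d(4) by (rule tendsto_lowerbound) (auto simp: eventually_at_top_linorder d(1) intro!: exI[of _ x])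
qed

lemma F_int0:
  assumes df: "distribution_function F" and nf: "neg_part_mean_finite F"
  shows "set_integrable lborel {..0} F"
proof -
  note d = df_facts[OF df]
  let ?M = "interval_measure F"
  interpret fm: finite_borel_measure ?M
    by (rule finite_borel_measure_interval_measure[where m=1]) (use d in auto)
  interpret ps: pair_sigma_finite ?M lborel
    by unfold_locales
  define f :: "real \<Rightarrow> real \<Rightarrow> ennreal" where "f = (\<lambda>x y. indicator {..0} y * indicator {..y} x)"
  have fm: "case_prod f \<in> borel_measurable (?M \<Otimes>\<^sub>M lborel)"
    unfolding f_def indicator_def atMost_iff by measurable
  have 1: "(\<integral>\<^sup>+ x. f x y \<partial>?M) = ennreal (indicator {..0} y * F y)" for y
  proof -
    have "(\<integral>\<^sup>+ x. f x y \<partial>?M) = indicator {..0} y * (\<integral>\<^sup>+ x. indicator {..y} x \<partial>?M)"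
      unfolding f_def by (subst nn_integral_cmult) auto
    also have "\<dots> = indicator {..0} y * ennreal (F y)"
      by (simp add: emeasure_interval_measure_Iic[OF d(1,2,3)])
    finally show ?thesis by (simp add: indicator_def)
  qed
  have 2: "(\<integral>\<^sup>+ y. f x y \<partial>lborel) = indicator {..0} x * ennreal (- x)" for x
  proof -
    have "(\<integral>\<^sup>+ y. f x y \<partial>lborel) = (\<integral>\<^sup>+ y. indicator {x..0} y \<partial>lborel)"
      unfolding f_def by (intro nn_integral_cong) (auto simp: indicator_def)
    also have "\<dots> = emeasure lborel {x..0}" by (rule nn_integral_indicator) simp
    also have "\<dots> = indicator {..0} x * ennreal (- x)"
      by (cases "x \<le> 0") (auto simp: indicator_def)
    finally show ?thesis .
  qed
  have "(\<integral>\<^sup>+ y. ennreal (indicator {..0} y * F y) \<partial>lborel) = (\<integral>\<^sup>+ x. indicator {..0} x * ennreal (- x) \<partial>?M)"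
    using ps.Fubini'[OF fm] by (simp add: 1 2)
  also have "\<dots> < \<infinity>" using nf unfolding neg_part_mean_finite_def by simp
  finally have fin: "(\<integral>\<^sup>+ y. ennreal (indicator {..0} y * F y) \<partial>lborel) < \<infinity>" .
  have mF: "F \<in> borel_measurable borel" using d(1) by (intro borel_measurable_mono) (simp add: mono_def)
  show ?thesis unfolding set_integrable_def
  proof (rule integrableI_bounded)
    show "(\<lambda>x. indicator {..0} x *\<^sub>R F x) \<in> borel_measurable lborel" using mF by measurable
    show "(\<integral>\<^sup>+ x. ennreal (norm (indicator {..0::real} x *\<^sub>R F x)) \<partial>lborel) < \<infinity>"
      using fin df_nonneg[OF df] by (simp add: abs_mult)
  qed
qed


lemma df_meas: assumes "distribution_function F" shows "F \<in> borel_measurable borel"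
  using df_facts(1)[OF assms] by (intro borel_measurable_mono) (simp add: mono_def)

lemma bounded_set_int:
  fixes f :: "real \<Rightarrow> real"
  assumes "f \<in> borel_measurable borel" "A \<in> sets borel" "emeasure lborel A < \<infinity>"
    "\<And>x. x \<in> A \<Longrightarrow> \<bar>f x\<bar> \<le> B"
  shows "set_integrable lborel A f"
  unfolding set_integrable_def
  by (rule integrableI_bounded_set_indicator[where B=B]) (use assms in auto)

lemma F_int:
  assumes df: "distribution_function F" and nf: "neg_part_mean_finite F"
  shows "set_integrable lborel {..t} F"
proof -
  have "set_integrable lborel {0..\<bar>t\<bar>} F"
    by (rule bounded_set_int[where B=1]) (use df_meas[OF df] df_nonneg[OF df] df_le1[OF df] in auto)
  then have "set_integrable lborel ({..0} \<union> {0..\<bar>t\<bar>}) F"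
    by (intro set_integrable_Un F_int0[OF df nf]) auto
  then show ?thesis by (rule set_integrable_subset) auto
qed

lemma VaR_props:
  assumes df: "distribution_function F" and a: "0 < \<alpha>" "\<alpha> < 1"
  shows "\<alpha> \<le> F (VaR \<alpha> F)" "\<And>y. y < VaR \<alpha> F \<Longrightarrow> F y < \<alpha>"
proof -
  note d = df_facts[OF df]
  define S where "S = {y. F y \<ge> \<alpha>}"
  have v: "VaR \<alpha> F = Inf S" by (simp add: VaR_def S_def)
  have "eventually (\<lambda>y. F y > \<alpha>) at_top" using order_tendstoD(1)[OF d(4) a(2)] .
  then obtain c where c: "\<And>y. y \<ge> c \<Longrightarrow> F y > \<alpha>" by (auto simp: eventually_at_top_linorder)
  have "c \<in> S" using c[of c] by (simp add: S_def)
  then have ne: "S \<noteq> {}" by blast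
  have "eventually (\<lambda>y. F y < \<alpha>) at_bot" using order_tendstoD(2)[OF d(3) a(1)] .
  then obtain b where b: "\<And>y. y \<le> b \<Longrightarrow> F y < \<alpha>" by (auto simp: eventually_at_bot_linorder)
  have bdd: "bdd_below S"
  proof (rule bdd_belowI[where m=b])
    fix x assume "x \<in> S"
    then show "b \<le> x" using b[of x] by (cases "b \<le> x") (auto simp: S_def)
  qed
  show lt: "F y < \<alpha>" if "y < VaR \<alpha> F" for y
  proof (rule ccontr)
    assume "\<not> F y < \<alpha>"
    then have "y \<in> S" by (simp add: S_def)
    then have "Inf S \<le> y" using cInf_lower[OF _ bdd] by blast
    then show False using that v by simp
  qed
  have ev: "eventually (\<lambda>y. \<alpha> \<le> F y) (at_right (VaR \<alpha> F))"
    unfolding eventually_at_right_field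
  proof (intro exI[of _ "VaR \<alpha> F + 1"] conjI allI impI)
    fix y assume "VaR \<alpha> F < y" "y < VaR \<alpha> F + 1"
    then have "Inf S < y" using v by simp
    then obtain s where "s \<in> S" "s < y" using cInf_less_iff[OF ne bdd] by auto
    then show "\<alpha> \<le> F y" using d(1)[of s y] by (auto simp: S_def)
  qed simp
  have "(F \<longlongrightarrow> F (VaR \<alpha> F)) (at_right (VaR \<alpha> F))"
    using d(2) by (simp add: continuous_within)
  then show "\<alpha> \<le> F (VaR \<alpha> F)"
    by (rule tendsto_lowerbound) (use ev in \<open>auto simp: trivial_limit_at_right_real\<close>)
qed

lemma split_int:
  fixes G :: "real \<Rightarrow> real"
  assumes "p \<le> q" "set_integrable lborel {..q} G"
  shows "(LINT y:{..q}|lborel. G y) = (LINT y:{..p}|lborel. G y) + (LINT y:{p<..<q}|lborel. G y)"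
proof -
  have "(LINT y:{..q}|lborel. G y) = (LINT y:{..p} \<union> {p<..<q}|lborel. G y)"
    by (rule set_integral_discrete_difference[where X="{q}"]) (use assms in auto)
  also have "\<dots> = (LINT y:{..p}|lborel. G y) + (LINT y:{p<..<q}|lborel. G y)"
    by (rule set_integral_Un) (auto intro: set_integrable_subset[OF assms(2)] simp: assms)
  finally show ?thesis .
qed

lemma const_int: "set_integrable lborel {p<..<q::real} (\<lambda>_. c::real)"
proof (rule bounded_set_int[where B="\<bar>c\<bar>"])
  show "emeasure lborel {p<..<q} < \<infinity>" by (cases "p \<le> q") auto
qed auto

lemma bound_int:
  fixes h :: "real \<Rightarrow> real"
  assumes "p \<le> q" "set_integrable lborel {p<..<q} h" "\<And>y. y \<in> {p<..<q} \<Longrightarrow> 0 \<le> h y \<and> h y \<le> S"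
  shows "0 \<le> (LINT y:{p<..<q}|lborel. h y) \<and> (LINT y:{p<..<q}|lborel. h y) \<le> S * (q - p)"
proof -
  note ci = const_int[of p q]
  have "(LINT y:{p<..<q}|lborel. (0::real)) \<le> (LINT y:{p<..<q}|lborel. h y)"
    by (rule set_integral_mono[OF ci assms(2)]) (use assms(3) in auto)
  moreover have "(LINT y:{p<..<q}|lborel. h y) \<le> (LINT y:{p<..<q}|lborel. S)"
    by (rule set_integral_mono[OF assms(2) ci]) (use assms(3) in auto)
  moreover have "(LINT y:{p<..<q}|lborel. S) = measure lborel {p<..<q} *\<^sub>R S"
    by (rule set_integral_const) (use assms(1) in auto)
  moreover have "measure lborel {p<..<q} *\<^sub>R S = S * (q - p)" using assms(1) by simp
  moreover have "(LINT y:{p<..<q}|lborel. (0::real)) = 0" by (simp add: set_lebesgue_integral_def)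
  ultimately show ?thesis by linarith
qed

lemma diff_bound:
  assumes "distribution_function F" "distribution_function G"
  shows "\<bar>F y - G y\<bar> \<le> diff_norm F G"
proof -
  have bdd: "bdd_above (range (\<lambda>x. \<bar>F x - G x\<bar>))"
  proof (rule bdd_aboveI[where M=1])
    fix t assume "t \<in> range (\<lambda>x. \<bar>F x - G x\<bar>)"
    then obtain x where x: "t = \<bar>F x - G x\<bar>" by auto
    show "t \<le> 1" unfolding x abs_le_iff
      using df_nonneg[OF assms(1), of x] df_le1[OF assms(1), of x] df_nonneg[OF assms(2), of x] df_le1[OF assms(2), of x] by linarith
  qed
  have "\<bar>F y - G y\<bar> \<le> sup_norm (\<lambda>x. F x - G x)"
    unfolding sup_norm_def using cSUP_upper[OF UNIV_I bdd] by simp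
  then show ?thesis unfolding diff_norm_def by simp
qed

theorem lemma27:
  fixes \<alpha> :: real and F G :: "real \<Rightarrow> real"
  assumes "0 < \<alpha>" "\<alpha> < 1"
    and "distribution_function F" "distribution_function G"
    and "neg_part_mean_finite F" "neg_part_mean_finite G"
  shows "0 \<le> CVaR \<alpha> G - CVaR \<alpha> F + (1 / \<alpha>) * (LINT y:{..VaR \<alpha> F}|lborel. G y - F y)
         \<and> CVaR \<alpha> G - CVaR \<alpha> F + (1 / \<alpha>) * (LINT y:{..VaR \<alpha> F}|lborel. G y - F y)
           \<le> (1 / \<alpha>) * diff_norm F G * \<bar>VaR \<alpha> F - VaR \<alpha> G\<bar>"
proof -
  define v where "v = VaR \<alpha> F"
  define w where "w = VaR \<alpha> G"
  define D where "D = diff_norm F G"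
  define IG where "IG t = (LINT y:{..t}|lborel. G y)" for t
  define IF where "IF t = (LINT y:{..t}|lborel. F y)" for t
  define E where "E = CVaR \<alpha> G - CVaR \<alpha> F + (1 / \<alpha>) * (LINT y:{..VaR \<alpha> F}|lborel. G y - F y)"
  note Fi = F_int[OF assms(3,5)] and Gi = F_int[OF assms(4,6)]
  have Ld: "(LINT y:{..v}|lborel. G y - F y) = IG v - IF v"
    unfolding IG_def IF_def by (rule set_integral_diff(2)[OF Gi Fi])
  have E: "\<alpha> * E = \<alpha> * (w - v) - (IG w - IG v)"
    unfolding E_def CVaR_def v_def[symmetric] w_def[symmetric] IG_def[symmetric] IF_def[symmetric] Ld
    using assms(1) by (simp add: field_simps)
  have Fv: "\<alpha> \<le> F v" "\<And>y. y < v \<Longrightarrow> F y < \<alpha>" using VaR_props[OF assms(3,1,2)] v_def by auto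
  have Gw: "\<alpha> \<le> G w" "\<And>y. y < w \<Longrightarrow> G y < \<alpha>" using VaR_props[OF assms(4,1,2)] w_def by auto
  note monoF = df_facts(1)[OF assms(3)] and monoG = df_facts(1)[OF assms(4)]
  have db: "\<And>y. \<bar>F y - G y\<bar> \<le> D" unfolding D_def by (rule diff_bound[OF assms(3,4)])
  note ci = const_int
  have key: "0 \<le> \<alpha> * E \<and> \<alpha> * E \<le> D * \<bar>v - w\<bar>"
  proof (cases "v \<le> w")
    case True
    have Gio: "set_integrable lborel {v<..<w} G" by (rule set_integrable_subset[OF Gi[of w]]) auto
    have "IG w - IG v = (LINT y:{v<..<w}|lborel. G y)"
      unfolding IG_def using split_int[OF True Gi] by simp
    moreover have "(LINT y:{v<..<w}|lborel. \<alpha> - G y) = \<alpha> * (w - v) - (LINT y:{v<..<w}|lborel. G y)"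
      using set_integral_diff(2)[OF ci Gio, of \<alpha>] set_integral_const[of "{v<..<w}" lborel \<alpha>] True by simp
    ultimately have eq: "\<alpha> * E = (LINT y:{v<..<w}|lborel. \<alpha> - G y)" using E by simp
    have "0 \<le> (LINT y:{v<..<w}|lborel. \<alpha> - G y) \<and> (LINT y:{v<..<w}|lborel. \<alpha> - G y) \<le> D * (w - v)"
    proof (rule bound_int[OF True set_integral_diff(1)[OF ci Gio]])
      fix y assume y: "y \<in> {v<..<w}"
      have "G y < \<alpha>" using Gw(2) y by auto
      moreover have "\<alpha> \<le> F y" using Fv(1) monoF[of v y] y by auto
      ultimately show "0 \<le> \<alpha> - G y \<and> \<alpha> - G y \<le> D" using db[of y] by auto
    qed
    then show ?thesis using eq True by simp
  next
    case False
    then have le: "w \<le> v" by simp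
    have Gio: "set_integrable lborel {w<..<v} G" by (rule set_integrable_subset[OF Gi[of v]]) auto
    have "IG v - IG w = (LINT y:{w<..<v}|lborel. G y)"
      unfolding IG_def using split_int[OF le Gi] by simp
    moreover have "(LINT y:{w<..<v}|lborel. G y - \<alpha>) = (LINT y:{w<..<v}|lborel. G y) - \<alpha> * (v - w)"
      using set_integral_diff(2)[OF Gio ci, of \<alpha>] set_integral_const[of "{w<..<v}" lborel \<alpha>] le by simp
    ultimately have eq: "\<alpha> * E = (LINT y:{w<..<v}|lborel. G y - \<alpha>)" using E by (simp add: algebra_simps)
    have "0 \<le> (LINT y:{w<..<v}|lborel. G y - \<alpha>) \<and> (LINT y:{w<..<v}|lborel. G y - \<alpha>) \<le> D * (v - w)"
    proof (rule bound_int[OF le set_integral_diff(1)[OF Gio ci]])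
      fix y assume y: "y \<in> {w<..<v}"
      have "F y < \<alpha>" using Fv(2) y by auto
      moreover have "\<alpha> \<le> G y" using Gw(1) monoG[of w y] y by auto
      ultimately show "0 \<le> G y - \<alpha> \<and> G y - \<alpha> \<le> D" using db[of y] by auto
    qed
    then show ?thesis using eq le by simp
  qed
  have "E = (\<alpha> * E) / \<alpha>" using assms(1) by simp
  then have "0 \<le> E \<and> E \<le> (1 / \<alpha>) * D * \<bar>v - w\<bar>"
    using key assms(1) by (auto simp: field_simps zero_le_mult_iff)
  then show ?thesis unfolding E_def D_def v_def w_def .
qed

end
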